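(* Let $k\ge 4$ be an integer and let $T=[a,a+h]\times[b,b+h]\subset\mathbb R^2$ be a square of side $h>0$ with lower-left vertex $\mathbf x_1=(a,b)$. Let $$V_T=\{v\in Q_k(T):\ \partial_{\mathbf n}v|_e\in Q_{k-1}(e)\ \text{for each of the four edges } e \text{ of } T\}.$$ Consider the following linear functionals on $V_T$: (i) $v\mapsto v(\mathbf x_1+\tfrac{h}{k-2}(i,j))$ for $i,j=0,\dots,k-2$; (ii) $v\mapsto \partial_x v(\mathbf x_1+h(i,\tfrac{j}{k-3}))$ for $i=0,1$, $j=0,\dots,k-3$; (iii) $v\mapsto \partial_y v(\mathbf x_1+h(\tfrac{i}{k-3},j))$ for $i=0,\dots,k-3$, $j=0,1$; (iv) $v\mapsto \partial_{xy} v(\mathbf x_1+h(i,j))$ for $i,j=0,1$. Then this set of degrees of freedom uniquely determines a function of $V_T$: for any prescribed values of these functionals there exists exactly one $v\in V_T$ attaining them.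
   Context: $Q_k$ denotes the space of polynomials of degree at most $k$ in each variable separately, i.e. $Q_k=\mathrm{span}\{x_1^{k_1}\cdots x_d^{k_d}:0\le k_i\le k\}$ in dimension $d$; on an edge $e$ (a segment) $Q_{k-1}(e)$ means polynomials of degree at most $k-1$ in the variable along the edge. $\partial_{\mathbf n}$ denotes the derivative in the direction normal to the edge $e$ (i.e. $\partial_y$ on horizontal edges, $\partial_x$ on vertical edges), and the condition means that its restriction to $e$ is a polynomial of degree at most $k-1$ along $e$. *)

theory Defs
  imports "HOL-Analysis.Analysis"
begin

definition Qk :: "nat \<Rightarrow> (real \<Rightarrow> real \<Rightarrow> real) \<Rightarrow> bool" where
  "Qk k v \<longleftrightarrow> (\<exists>c :: nat \<Rightarrow> nat \<Rightarrow> real.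
      \<forall>x y. v x y = (\<Sum>i\<le>k. \<Sum>j\<le>k. c i j * x ^ i * y ^ j))"

definition poly1_on :: "nat \<Rightarrow> real set \<Rightarrow> (real \<Rightarrow> real) \<Rightarrow> bool" where
  "poly1_on n S f \<longleftrightarrow> (\<exists>c :: nat \<Rightarrow> real. \<forall>t\<in>S. f t = (\<Sum>i\<le>n. c i * t ^ i))"

definition dx :: "(real \<Rightarrow> real \<Rightarrow> real) \<Rightarrow> real \<Rightarrow> real \<Rightarrow> real" where
  "dx v x y = deriv (\<lambda>t. v t y) x"

definition dy :: "(real \<Rightarrow> real \<Rightarrow> real) \<Rightarrow> real \<Rightarrow> real \<Rightarrow> real" where
  "dy v x y = deriv (\<lambda>s. v x s) y"

definition dxy :: "(real \<Rightarrow> real \<Rightarrow> real) \<Rightarrow> real \<Rightarrow> real \<Rightarrow> real" where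
  "dxy v x y = deriv (\<lambda>s. dx v x s) y"

text \<open>V_T for T = [a,a+h] x [b,b+h]: normal derivative on each edge is in Q_{k-1}(e).
  Horizontal edges y=b, y=b+h (normal derivative d/dy), vertical edges x=a, x=a+h (d/dx).\<close>
definition VT :: "nat \<Rightarrow> real \<Rightarrow> real \<Rightarrow> real \<Rightarrow> (real \<Rightarrow> real \<Rightarrow> real) set" where
  "VT k a b h = {v. Qk k v
      \<and> poly1_on (k - 1) {a..a+h} (\<lambda>x. dy v x b)
      \<and> poly1_on (k - 1) {a..a+h} (\<lambda>x. dy v x (b + h))
      \<and> poly1_on (k - 1) {b..b+h} (\<lambda>y. dx v a y)
      \<and> poly1_on (k - 1) {b..b+h} (\<lambda>y. dx v (a + h) y)}"

end

theory Submission imports Defs "Jordan_Normal_Form.Determinant" "HOL-Computational_Algebra.Polynomial" begin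

lemma double_root:
  fixes p :: "real poly"
  assumes "poly p r = 0" "poly (pderiv p) r = 0"
  shows "\<exists>q. p = [:-r,1:]^2 * q"
proof -
  from assms(1) obtain q where q: "p = [:-r,1:] * q" using poly_eq_0_iff_dvd by (metis dvdE)
  have d1: "pderiv [:-r,1:] = 1" by (simp add: pderiv_pCons)
  have "pderiv p = [:-r,1:] * pderiv q + q * pderiv [:-r,1:]" unfolding q by (rule pderiv_mult)
  hence "pderiv p = q + [:-r,1:] * pderiv q" using d1 by simp
  hence "poly q r = 0" using assms(2) by simp
  then obtain q2 where "q = [:-r,1:]*q2" using poly_eq_0_iff_dvd by (metis dvdE)
  hence "p = [:-r,1:]^2 * q2" using q by (simp only: power2_eq_square mult.assoc)
  thus ?thesis by blast
qed


lemma key1d: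
  fixes p :: "real poly"
  assumes fin: "finite S" and deg: "degree p \<le> card S + 1" and roots: "\<forall>x\<in>S. poly p x = 0"
   and r: "r1 \<in> S" "r2 \<in> S" "r1 \<noteq> r2" "poly (pderiv p) r1 = 0" "poly (pderiv p) r2 = 0"
  shows "p = 0"
proof (rule ccontr)
  assume p0: "p \<noteq> 0"
  obtain q1 where q1: "p = [:-r1,1:]^2 * q1" using double_root roots r by blast
  have "poly p r2 = (r2-r1)^2 * poly q1 r2" using q1 by simp
  hence pq1: "poly q1 r2 = 0" using roots r by simp
  have "pderiv p = pderiv ([:-r1,1:]^2) * q1 + [:-r1,1:]^2 * pderiv q1"
    using q1 by (simp add: pderiv_mult)
  hence "poly (pderiv p) r2 = poly (pderiv ([:-r1,1:]^2)) r2 * poly q1 r2 + (r2-r1)^2 * poly (pderiv q1) r2"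
    by simp
  hence "poly (pderiv q1) r2 = 0" using pq1 r by simp
  then obtain q where q: "q1 = [:-r2,1:]^2 * q" using double_root pq1 by blast
  have pe: "p = ([:-r1,1:]^2 * [:-r2,1:]^2) * q" using q1 q by (simp add: mult.assoc)
  have q0: "q \<noteq> 0" using p0 pe by auto
  have dp: "degree p = 4 + degree q" unfolding pe
    by (subst degree_mult_eq) (auto simp: q0 degree_mult_eq degree_power_eq)
  have sub: "S - {r1,r2} \<subseteq> {x. poly q x = 0}"
  proof
    fix x assume x: "x \<in> S - {r1,r2}"
    have "poly p x = ((x-r1)^2 * (x-r2)^2) * poly q x" using pe by simp
    thus "x \<in> {x. poly q x = 0}" using x roots by auto
  qed
  have "card (S - {r1,r2}) \<le> card {x. poly q x = 0}"
    by (rule card_mono[OF poly_roots_finite[OF q0] sub])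
  also have "\<dots> \<le> degree q" by (rule card_poly_roots_bound[OF q0])
  finally have "card (S - {r1,r2}) \<le> degree q" .
  moreover have "card (S - {r1,r2}) = card S - 2" using r fin by (simp add: card_Diff_subset)
  moreover have "card S \<ge> 2"
  proof -
    have "{r1,r2} \<subseteq> S" using r by auto
    from card_mono[OF fin this] show ?thesis using r by simp
  qed
  ultimately show False using dp deg by linarith
qed

definition ev :: "nat \<Rightarrow> (nat\<Rightarrow>nat\<Rightarrow>real) \<Rightarrow> real \<Rightarrow> real \<Rightarrow> real" where
  "ev k c x y = (\<Sum>i\<le>k. \<Sum>j\<le>k. c i j * x^i * y^j)"

lemma Qk_ev: "Qk k v \<Longrightarrow> \<exists>c. v = ev k c"
proof -
  assume "Qk k v"
  then obtain c where "\<forall>x y. v x y = (\<Sum>i\<le>k. \<Sum>j\<le>k. c i j * x ^ i * y ^ j)" unfolding Qk_def by blast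
  hence "v = ev k c" unfolding ev_def by (intro ext) simp
  thus ?thesis by blast
qed

lemma pow1: "((\<lambda>x. x ^ n) has_real_derivative real n * x^(n-1)) (at x)"
  using DERIV_pow[of n x UNIV] by simp

lemma L1:
  assumes "finite I" "finite J"
  shows "deriv (\<lambda>t. \<Sum>i\<in>I. \<Sum>j\<in>J. e i j * t^i * q j) x = (\<Sum>i\<in>I. \<Sum>j\<in>J. e i j * (real i * x^(i-1)) * q j)"
proof (rule DERIV_imp_deriv)
  show "((\<lambda>t. \<Sum>i\<in>I. \<Sum>j\<in>J. e i j * t^i * q j) has_real_derivative (\<Sum>i\<in>I. \<Sum>j\<in>J. e i j * (real i * x^(i-1)) * q j)) (at x)"
    by (intro DERIV_sum DERIV_cmult DERIV_cmult_right pow1) 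
qed

lemma L2:
  assumes "finite I" "finite J"
  shows "deriv (\<lambda>s. \<Sum>i\<in>I. \<Sum>j\<in>J. e i j * s^j) y = (\<Sum>i\<in>I. \<Sum>j\<in>J. e i j * (real j * y^(j-1)))"
proof (rule DERIV_imp_deriv)
  show "((\<lambda>s. \<Sum>i\<in>I. \<Sum>j\<in>J. e i j * s^j) has_real_derivative (\<Sum>i\<in>I. \<Sum>j\<in>J. e i j * (real j * y^(j-1)))) (at y)"
    by (intro DERIV_sum DERIV_cmult pow1) 
qed

lemma dx_ev: "dx (ev k c) x y = (\<Sum>i\<le>k. \<Sum>j\<le>k. c i j * (real i * x^(i-1)) * y^j)"
  unfolding dx_def ev_def by (rule L1) auto
lemma dy_ev: "dy (ev k c) x y = (\<Sum>i\<le>k. \<Sum>j\<le>k. c i j * x^i * (real j * y^(j-1)))"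
  unfolding dy_def ev_def by (subst L2) (auto simp: mult.assoc)
lemma dxy_ev: "dxy (ev k c) x y = (\<Sum>i\<le>k. \<Sum>j\<le>k. c i j * (real i * x^(i-1)) * (real j * y^(j-1)))"
  unfolding dxy_def dx_ev by (subst L2) (auto simp: mult.assoc)
lemma dyx_ev: "deriv (\<lambda>t. dy (ev k c) t y) x = (\<Sum>i\<le>k. \<Sum>j\<le>k. c i j * (real i * x^(i-1)) * (real j * y^(j-1)))"
  unfolding dy_ev by (rule L1) auto

lemma polyfun: fixes a :: "nat \<Rightarrow> real" shows "\<exists>P. degree P \<le> n \<and> (\<forall>t. (\<Sum>i\<le>n. a i * t^i) = poly P t)"
proof (intro exI conjI allI)
  show "degree (\<Sum>i\<le>n. monom (a i :: real) i) \<le> n"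
    by (rule degree_sum_le) (auto intro: order.trans[OF degree_monom_le])
  fix t show "(\<Sum>i\<le>n. a i * t^i) = poly (\<Sum>i\<le>n. monom (a i) i) t"
    by (simp add: poly_sum poly_monom)
qed

lemma poly_agree:
  fixes P Q :: "real poly"
  assumes "\<forall>t\<in>{lo..hi}. poly P t = poly Q t" "lo < hi"
  shows "P = Q"
proof (rule ccontr)
  assume "P \<noteq> Q"
  hence "P - Q \<noteq> 0" by simp
  from poly_roots_finite[OF this] have "finite {x. poly (P - Q) x = 0}" .
  moreover have "{lo..hi} \<subseteq> {x. poly (P - Q) x = 0}" using assms(1) by auto
  ultimately have "finite {lo..hi}" by (rule finite_subset[rotated])
  thus False using infinite_Icc[OF assms(2)] by simp
qed

lemma line_zero:
  fixes f :: "real \<Rightarrow> real" and P :: "real poly"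
  assumes fP: "\<forall>t. f t = poly P t" and dg: "degree P \<le> n+2" and n: "n > 0" and h: "h > 0"
    and z: "\<forall>i\<le>n. f (lo + h*real i/real n) = 0"
    and d1: "deriv f lo = 0" and d2: "deriv f (lo+h) = 0"
  shows "f t = 0"
proof -
  define S where "S = (\<lambda>i. lo + h*real i/real n) ` {..n}"
  have inj: "inj_on (\<lambda>i. lo + h*real i/real n) {..n}"
    using h n by (auto simp: inj_on_def field_simps)
  have cS: "card S = n + 1" unfolding S_def using card_image[OF inj] by simp
  have fS: "finite S" unfolding S_def by simp
  have lo: "lo \<in> S" unfolding S_def by (rule image_eqI[of _ _ 0]) auto
  have hi: "lo + h \<in> S" unfolding S_def by (rule image_eqI[of _ _ n]) (use n in auto)
  have fe: "f = poly P" using fP by (intro ext) simp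
  have dr: "deriv f r = poly (pderiv P) r" for r unfolding fe by (rule DERIV_imp_deriv[OF poly_DERIV])
  have "P = 0"
  proof (rule key1d[OF fS _ _ lo hi])
    show "degree P \<le> card S + 1" using cS dg by simp
    show "\<forall>x\<in>S. poly P x = 0" using z fP unfolding S_def by auto
    show "lo \<noteq> lo + h" using h by simp
    show "poly (pderiv P) lo = 0" using d1 dr by simp
    show "poly (pderiv P) (lo + h) = 0" using d2 dr by simp
  qed
  thus ?thesis using fP by simp
qed

lemma edge_zero:
  fixes f :: "real \<Rightarrow> real" and P :: "real poly"
  assumes fP: "\<forall>t. f t = poly P t" and p1: "poly1_on d {lo..lo+h} f" and dg: "d \<le> n+2"
    and n: "n > 0" and h: "h > 0"
    and z: "\<forall>i\<le>n. f (lo + h*real i/real n) = 0"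
    and d1: "deriv f lo = 0" and d2: "deriv f (lo+h) = 0"
  shows "f t = 0"
proof -
  obtain a where a: "\<forall>t\<in>{lo..lo+h}. f t = (\<Sum>i\<le>d. a i * t ^ i)" using p1 unfolding poly1_on_def by blast
  obtain Q where Q: "degree Q \<le> d" "\<forall>t. (\<Sum>i\<le>d. a i * t^i) = poly Q t" using polyfun by blast
  have "P = Q" by (rule poly_agree[of lo "lo+h"]) (use a Q fP h in auto)
  show ?thesis by (rule line_zero[of f Q n h lo]) (use fP Q dg n h z d1 d2 \<open>P = Q\<close> in auto)
qed

lemma s1: "\<exists>P. degree P \<le> k \<and> (\<forall>s. ev k c x s = poly P s)"
proof -
  have "ev k c x s = (\<Sum>j\<le>k. (\<Sum>i\<le>k. c i j * x^i) * s^j)" for s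
    unfolding ev_def by (subst sum.swap) (simp add: sum_distrib_right)
  thus ?thesis using polyfun[of k "\<lambda>j. \<Sum>i\<le>k. c i j * x^i"] by metis
qed

lemma s2: "\<exists>P. degree P \<le> k \<and> (\<forall>t. ev k c t y = poly P t)"
proof -
  have "ev k c t y = (\<Sum>i\<le>k. (\<Sum>j\<le>k. c i j * y^j) * t^i)" for t
    unfolding ev_def by (simp add: sum_distrib_left mult_ac)
  thus ?thesis using polyfun[of k "\<lambda>i. \<Sum>j\<le>k. c i j * y^j"] by metis
qed

lemma s3: "\<exists>P. \<forall>s. dx (ev k c) x s = poly P s"
proof -
  have "dx (ev k c) x s = (\<Sum>j\<le>k. (\<Sum>i\<le>k. c i j * (real i * x^(i-1))) * s^j)" for s
    unfolding dx_ev by (subst sum.swap) (simp add: sum_distrib_right)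
  thus ?thesis using polyfun[of k "\<lambda>j. \<Sum>i\<le>k. c i j * (real i * x^(i-1))"] by metis
qed

lemma s4: "\<exists>P. \<forall>t. dy (ev k c) t y = poly P t"
proof -
  have "dy (ev k c) t y = (\<Sum>i\<le>k. (\<Sum>j\<le>k. c i j * (real j * y^(j-1))) * t^i)" for t
    unfolding dy_ev by (simp add: sum_distrib_left mult_ac)
  thus ?thesis using polyfun[of k "\<lambda>i. \<Sum>j\<le>k. c i j * (real j * y^(j-1))"] by metis
qed

lemma core:
  fixes k :: nat and a b h :: real and c :: "nat \<Rightarrow> nat \<Rightarrow> real"
  assumes k4: "k \<ge> 4" and h: "h > 0" and vdef: "v = ev k c"
  and e1: "poly1_on (k - 1) {a..a+h} (\<lambda>x. dy v x b)"
  and e2: "poly1_on (k - 1) {a..a+h} (\<lambda>x. dy v x (b + h))"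
  and e3: "poly1_on (k - 1) {b..b+h} (\<lambda>y. dx v a y)"
  and e4: "poly1_on (k - 1) {b..b+h} (\<lambda>y. dx v (a + h) y)"
  and zA: "\<forall>i\<le>k-2. \<forall>j\<le>k-2.
          v (a + h * real i / real (k-2)) (b + h * real j / real (k-2)) = 0"
  and zB: "\<forall>i\<le>1. \<forall>j\<le>k-3.
          dx v (a + h * real i) (b + h * real j / real (k-3)) = 0"
  and zC: "\<forall>i\<le>k-3. \<forall>j\<le>1.
          dy v (a + h * real i / real (k-3)) (b + h * real j) = 0"
  and zD: "\<forall>i\<le>1. \<forall>j\<le>1.
          dxy v (a + h * real i) (b + h * real j) = 0"
  shows "v x y = 0"
proof -
  have n: "k - 2 > 0" and m: "k - 3 > 0" using k4 by auto
  have dg1: "k - 1 \<le> (k - 3) + 2" and dg2: "k \<le> (k-2) + 2" using k4 by auto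
  have D: "dxy v a b = 0" "dxy v a (b+h) = 0" "dxy v (a+h) b = 0" "dxy v (a+h) (b+h) = 0"
    using zD[rule_format, of 0 0] zD[rule_format, of 0 1] zD[rule_format, of 1 0] zD[rule_format, of 1 1]
    by simp_all
  have dxz: "dx v xe s = 0" if xe: "xe = a \<or> xe = a + h" for xe s
  proof -
    obtain P where P: "\<forall>s. dx v xe s = poly P s" using s3 vdef by blast
    have p1: "poly1_on (k - 1) {b..b+h} (dx v xe)" using e3 e4 xe by auto
    have z: "\<forall>j\<le>k-3. dx v xe (b + h*real j/real (k-3)) = 0"
    proof (intro allI impI)
      fix j assume "j \<le> k - 3"
      thus "dx v xe (b + h*real j/real (k-3)) = 0"
        using zB[rule_format, of 0 j] zB[rule_format, of 1 j] xe by auto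
    qed
    have "deriv (dx v xe) b = dxy v xe b" "deriv (dx v xe) (b+h) = dxy v xe (b+h)"
      unfolding dxy_def by simp_all
    hence d: "deriv (dx v xe) b = 0" "deriv (dx v xe) (b+h) = 0" using D xe by auto
    show ?thesis by (rule edge_zero[OF P p1 dg1 m h z d])
  qed
  have st1: "v t (b + h*real j/real (k-2)) = 0" if j: "j \<le> k-2" for j t
  proof -
    obtain P where P: "degree P \<le> k" "\<forall>t. v t (b + h*real j/real (k-2)) = poly P t"
      using s2 vdef by blast
    have dg: "degree P \<le> (k-2) + 2" using P(1) dg2 by linarith
    have z: "\<forall>i\<le>k-2. v (a + h*real i/real (k-2)) (b + h*real j/real (k-2)) = 0"
      using zA j by blast
    have d: "deriv (\<lambda>t. v t (b + h*real j/real (k-2))) a = 0"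
      "deriv (\<lambda>t. v t (b + h*real j/real (k-2))) (a+h) = 0"
      using dxz[of a] dxz[of "a+h"] unfolding dx_def by auto
    show ?thesis by (rule line_zero[where f="\<lambda>t. v t (b + h*real j/real (k-2))", OF P(2) dg n h z d])
  qed
  have dyz: "dy v t ye = 0" if ye: "ye = b \<or> ye = b + h" for ye t
  proof -
    obtain P where P: "\<forall>t. dy v t ye = poly P t" using s4 vdef by blast
    have p1: "poly1_on (k - 1) {a..a+h} (\<lambda>t. dy v t ye)" using e1 e2 ye by auto
    have z: "\<forall>i\<le>k-3. dy v (a + h*real i/real (k-3)) ye = 0"
    proof (intro allI impI)
      fix i assume "i \<le> k - 3"
      thus "dy v (a + h*real i/real (k-3)) ye = 0"
        using zC[rule_format, of i 0] zC[rule_format, of i 1] ye by auto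
    qed
    have "deriv (\<lambda>t. dy v t ye) xx = dxy v xx ye" for xx
      unfolding vdef dyx_ev dxy_ev by simp
    hence d: "deriv (\<lambda>t. dy v t ye) a = 0" "deriv (\<lambda>t. dy v t ye) (a+h) = 0" using D ye by auto
    show ?thesis by (rule edge_zero[where f="\<lambda>t. dy v t ye", OF P p1 dg1 m h z d])
  qed
  obtain P where P: "degree P \<le> k" "\<forall>s. v x s = poly P s" using s1 vdef by blast
  have dg: "degree P \<le> (k-2) + 2" using P(1) dg2 by linarith
  have z: "\<forall>j\<le>k-2. v x (b + h*real j/real (k-2)) = 0" using st1 by blast
  have d: "deriv (\<lambda>s. v x s) b = 0" "deriv (\<lambda>s. v x s) (b+h) = 0"
    using dyz[of b] dyz[of "b+h"] unfolding dy_def by auto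
  show ?thesis by (rule line_zero[where f="\<lambda>s. v x s", OF P(2) dg n h z d])
qed

lemma sum_reindex_grid:
  fixes g :: "nat \<Rightarrow> real"
  shows "(\<Sum>m<n*K. g m) = (\<Sum>i<n. \<Sum>j<K. g (i*K+j))"
proof (induction n)
  case 0 show ?case by simp
next
  case (Suc n)
  have u: "{..<Suc n * K} = {..<n*K} \<union> {n*K..<K+n*K}" by auto
  have "(\<Sum>m<Suc n*K. g m) = (\<Sum>m<n*K. g m) + (\<Sum>m\<in>{n*K..<K+n*K}. g m)"
    unfolding u by (rule sum.union_disjoint) auto
  also have "(\<Sum>m\<in>{n*K..<K+n*K}. g m) = (\<Sum>j<K. g (n*K+j))"
    using sum.shift_bounds_nat_ivl[of g 0 "n*K" K] by (simp add: atLeast0LessThan add.commute)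
  finally show ?case using Suc by simp
qed

lemma linsys:
  fixes F :: "nat \<Rightarrow> nat \<Rightarrow> nat \<Rightarrow> real" and beta :: "nat \<Rightarrow> real" and K N :: nat
  assumes NK: "N = K*K"
    and ker: "\<And>c. (\<forall>r<N. (\<Sum>i<K. \<Sum>j<K. F r i j * c i j) = 0) \<Longrightarrow> (\<forall>i<K. \<forall>j<K. c i j = 0)"
  shows "\<exists>c. \<forall>r<N. (\<Sum>i<K. \<Sum>j<K. F r i j * c i j) = beta r"
proof -
  define M :: "real mat" where "M = Matrix.mat N N (\<lambda>(r,m). F r (m div K) (m mod K))"
  have Mc: "M \<in> carrier_mat N N" unfolding M_def by simp
  have Mv: "(M *\<^sub>v x) $ r = (\<Sum>i<K. \<Sum>j<K. F r i j * x $ (i*K+j))"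
    if x: "x \<in> carrier_vec N" and r: "r < N" for x r
  proof -
    have "(M *\<^sub>v x) $ r = (\<Sum>m\<in>{0..<N}. M $$ (r,m) * x $ m)"
      using x r Mc by (simp add: scalar_prod_def)
    also have "\<dots> = (\<Sum>m<K*K. F r (m div K) (m mod K) * x $ m)"
      using r unfolding M_def NK by (intro sum.cong) auto
    also have "\<dots> = (\<Sum>i<K. \<Sum>j<K. F r ((i*K+j) div K) ((i*K+j) mod K) * x $ (i*K+j))"
      by (rule sum_reindex_grid[of "\<lambda>m. F r (m div K) (m mod K) * x $ m" K K])
    also have "\<dots> = (\<Sum>i<K. \<Sum>j<K. F r i j * x $ (i*K+j))"
      by (intro sum.cong refl) auto
    finally show ?thesis .
  qed
  have "Determinant.det M \<noteq> 0"
  proof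
    assume "Determinant.det M = 0"
    then obtain x where x: "x \<in> carrier_vec N" "x \<noteq> 0\<^sub>v N" "M *\<^sub>v x = 0\<^sub>v N"
      using det_0_iff_vec_prod_zero_field[OF Mc] by blast
    have "\<forall>r<N. (\<Sum>i<K. \<Sum>j<K. F r i j * x $ (i*K+j)) = 0"
    proof (intro allI impI)
      fix r assume r: "r < N"
      have "(M *\<^sub>v x) $ r = 0" using x(3) r by simp
      thus "(\<Sum>i<K. \<Sum>j<K. F r i j * x $ (i*K+j)) = 0" using Mv[OF x(1) r] by simp
    qed
    from ker[of "\<lambda>i j. (x :: real Matrix.vec) $ (i*K+j)", OF this] have z: "\<forall>i<K. \<forall>j<K. x $ (i*K+j) = 0" .
    have "x = 0\<^sub>v N"
    proof (rule eq_vecI)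
      fix m assume "m < dim_vec (0\<^sub>v N :: real vec)"
      hence m: "m < K*K" using NK by simp
      have K0: "K > 0" using m by (cases K) auto
      have "m div K < K" using m by (rule less_mult_imp_div_less)
      moreover have "m mod K < K" using K0 by (rule mod_less_divisor)
      ultimately have "x $ ((m div K)*K + m mod K) = 0" using z by blast
      thus "x $ m = 0\<^sub>v N $ m" using m NK by simp
    next
      show "dim_vec x = dim_vec (0\<^sub>v N :: real vec)" using x(1) by simp
    qed
    thus False using x(2) by simp
  qed
  from det_non_zero_imp_unit[OF Mc this, of "()"]
  obtain B where B: "B \<in> carrier_mat N N" "M * B = 1\<^sub>m N"
    unfolding Units_def ring_mat_def by auto
  define bv where "bv = Matrix.vec N beta"
  define x where "x = B *\<^sub>v bv"
  have bvc: "bv \<in> carrier_vec N" unfolding bv_def by simp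
  have xc: "x \<in> carrier_vec N" unfolding x_def using B(1) bvc by simp
  have "M *\<^sub>v x = (M * B) *\<^sub>v bv" unfolding x_def
    by (rule assoc_mult_mat_vec[symmetric, OF Mc B(1) bvc])
  also have "\<dots> = bv" using B(2) one_mult_mat_vec[OF bvc] by simp
  finally have Mx: "M *\<^sub>v x = bv" .
  have *: "\<forall>r<N. (\<Sum>i<K. \<Sum>j<K. F r i j * x $ (i*K+j)) = beta r"
  proof (intro allI impI)
    fix r assume r: "r < N"
    have "(M *\<^sub>v x) $ r = beta r" unfolding Mx bv_def using r by simp
    thus "(\<Sum>i<K. \<Sum>j<K. F r i j * x $ (i*K+j)) = beta r" using Mv[OF xc r] by simp
  qed
  show ?thesis by (rule exI[of _ "\<lambda>i j. (x :: real Matrix.vec) $ (i*K+j)"]) (use * in simp)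
qed

lemma ev_diff: "ev k (\<lambda>i j. c1 i j - c2 i j) x y = ev k c1 x y - ev k c2 x y"
  unfolding ev_def by (simp add: sum_subtractf left_diff_distrib)
lemma dx_diff: "dx (ev k (\<lambda>i j. c1 i j - c2 i j)) x y = dx (ev k c1) x y - dx (ev k c2) x y"
  unfolding dx_ev by (simp add: sum_subtractf left_diff_distrib)
lemma dy_diff: "dy (ev k (\<lambda>i j. c1 i j - c2 i j)) x y = dy (ev k c1) x y - dy (ev k c2) x y"
  unfolding dy_ev by (simp add: sum_subtractf left_diff_distrib)
lemma dxy_diff: "dxy (ev k (\<lambda>i j. c1 i j - c2 i j)) x y = dxy (ev k c1) x y - dxy (ev k c2) x y"
  unfolding dxy_ev by (simp add: sum_subtractf left_diff_distrib)

lemma poly1_diff: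
  assumes "poly1_on n S f" "poly1_on n S g"
  shows "poly1_on n S (\<lambda>t. f t - g t)"
proof -
  obtain a where a: "\<forall>t\<in>S. f t = (\<Sum>i\<le>n. a i * t ^ i)" using assms(1) unfolding poly1_on_def by blast
  obtain b where b: "\<forall>t\<in>S. g t = (\<Sum>i\<le>n. b i * t ^ i)" using assms(2) unfolding poly1_on_def by blast
  have *: "\<forall>t\<in>S. f t - g t = (\<Sum>i\<le>n. (a i - b i) * t ^ i)"
    using a b by (simp add: sum_subtractf left_diff_distrib)
  show ?thesis unfolding poly1_on_def by (rule exI[of _ "\<lambda>i. a i - b i"]) (use * in simp)
qed

lemma coef1:
  fixes a :: "nat \<Rightarrow> real"
  assumes "\<forall>t. (\<Sum>i\<le>n. a i * t^i) = 0" and "i \<le> n"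
  shows "a i = 0"
proof -
  define P where "P = (\<Sum>i\<le>n. monom (a i) i)"
  have "poly P = poly 0" unfolding P_def using assms(1) by (intro ext) (simp add: poly_sum poly_monom)
  hence "P = 0" by (simp add: poly_eq_poly_eq_iff)
  hence "coeff P i = 0" by simp
  moreover have "coeff P i = a i" unfolding P_def using assms(2) by (simp add: coeff_sum)
  ultimately show ?thesis by simp
qed

lemma coef0:
  assumes "\<forall>x y. ev k c x y = 0" "i \<le> k" "j \<le> k"
  shows "c i j = 0"
proof -
  have "\<forall>y. (\<Sum>j\<le>k. c i j * y^j) = 0"
  proof
    fix y
    have "ev k c t y = (\<Sum>i\<le>k. (\<Sum>j\<le>k. c i j * y^j) * t^i)" for t
      unfolding ev_def by (simp add: sum_distrib_left mult_ac)
    hence "\<forall>t. (\<Sum>i\<le>k. (\<Sum>j\<le>k. c i j * y^j) * t^i) = 0" using assms(1) by simp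
    from coef1[OF this assms(2)] show "(\<Sum>j\<le>k. c i j * y^j) = 0" .
  qed
  from coef1[OF this assms(3)] show ?thesis .
qed

definition phi :: "nat \<Rightarrow> (nat\<Rightarrow>nat\<Rightarrow>real) \<Rightarrow> (nat\<Rightarrow>nat\<Rightarrow>real) \<Rightarrow> real" where
  "phi k w c = (\<Sum>i\<le>k. \<Sum>j\<le>k. w i j * c i j)"

definition rows :: "nat \<Rightarrow> real \<Rightarrow> real \<Rightarrow> real \<Rightarrow> (nat\<Rightarrow>nat\<Rightarrow>real) \<Rightarrow> (nat\<Rightarrow>nat\<Rightarrow>real)
   \<Rightarrow> (nat\<Rightarrow>nat\<Rightarrow>real) \<Rightarrow> (nat\<Rightarrow>nat\<Rightarrow>real) \<Rightarrow> ((nat\<Rightarrow>nat\<Rightarrow>real) \<times> real) list" where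
"rows k a b h A B C D =
  map (\<lambda>(i,j). (\<lambda>p q. (a + h*real i/real(k-2))^p * (b + h*real j/real(k-2))^q, A i j)) (List.product [0..<k-1] [0..<k-1])
 @ map (\<lambda>(i,j). (\<lambda>p q. (real p * (a + h*real i)^(p-1)) * (b + h*real j/real(k-3))^q, B i j)) (List.product [0..<2] [0..<k-2])
 @ map (\<lambda>(i,j). (\<lambda>p q. (a + h*real i/real(k-3))^p * (real q * (b + h*real j)^(q-1)), C i j)) (List.product [0..<k-2] [0..<2])
 @ map (\<lambda>(i,j). (\<lambda>p q. (real p * (a + h*real i)^(p-1)) * (real q * (b + h*real j)^(q-1)), D i j)) (List.product [0..<2] [0..<2])
 @ [(\<lambda>p q. if p = k then real q * b^(q-1) else 0, 0), (\<lambda>p q. if p = k then real q * (b+h)^(q-1) else 0, 0),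
    (\<lambda>p q. if q = k then real p * a^(p-1) else 0, 0), (\<lambda>p q. if q = k then real p * (a+h)^(p-1) else 0, 0)]"

lemma rows_len: assumes "k \<ge> 4" shows "length (rows k a b h A B C D) = (k+1)*(k+1)"
proof -
  obtain m where "k = m + 4" using assms by (metis add.commute le_Suc_ex)
  thus ?thesis unfolding rows_def by (simp add: algebra_simps)
qed

lemma rows_fst: "map fst (rows k a b h A B C D) = map fst (rows k a b h A' B' C' D')"
  unfolding rows_def by (simp add: case_prod_beta)

lemma rows_snd0: "x \<in> set (rows k a b h (\<lambda>_ _. 0) (\<lambda>_ _. 0) (\<lambda>_ _. 0) (\<lambda>_ _. 0)) \<Longrightarrow> snd x = 0"
  unfolding rows_def by auto

lemma phi_val: "ev k c x y = phi k (\<lambda>p q. x^p * y^q) c"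
  unfolding ev_def phi_def by (simp add: mult_ac)
lemma phi_dx: "dx (ev k c) x y = phi k (\<lambda>p q. (real p * x^(p-1)) * y^q) c"
  unfolding dx_ev phi_def by (simp add: mult_ac)
lemma phi_dy: "dy (ev k c) x y = phi k (\<lambda>p q. x^p * (real q * y^(q-1))) c"
  unfolding dy_ev phi_def by (simp add: mult_ac)
lemma phi_dxy: "dxy (ev k c) x y = phi k (\<lambda>p q. (real p * x^(p-1)) * (real q * y^(q-1))) c"
  unfolding dxy_ev phi_def by (simp add: mult_ac)

lemma phi_E1: "phi k (\<lambda>p q. if p = k then X q else 0) c = (\<Sum>j\<le>k. c k j * X j)"
proof -
  have "(\<Sum>j\<le>k. (if i = k then X j else 0) * c i j) = (if i = k then (\<Sum>j\<le>k. c k j * X j) else 0)" for i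
    by (auto simp: mult_ac)
  thus ?thesis unfolding phi_def by simp
qed
lemma phi_E2: "phi k (\<lambda>p q. if q = k then X p else 0) c = (\<Sum>i\<le>k. c i k * X i)"
proof -
  have "(\<Sum>j\<le>k. (if j = k then X i else 0) * c i j) = c i k * X i" for i
  proof -
    have "(\<Sum>j\<le>k. (if j = k then X i else 0) * c i j) = (\<Sum>j\<le>k. (if j = k then X i * c i j else 0))"
      by (intro sum.cong) auto
    thus ?thesis by simp
  qed
  thus ?thesis unfolding phi_def by simp
qed

lemma trunc:
  fixes g :: "nat \<Rightarrow> real"
  assumes "\<forall>x. f x = (\<Sum>i\<le>k. g i * x^i)" "g k = 0" "k > 0"
  shows "poly1_on (k-1) S f"
proof -
  have kk: "k = Suc (k-1)" using assms(3) by simp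
  have "(\<Sum>i\<le>k. g i * x^i) = (\<Sum>i\<le>k-1. g i * x^i)" for x
    using sum.atMost_Suc[of "\<lambda>i. g i * x^i" "k-1"] kk assms(2) by simp
  thus ?thesis unfolding poly1_on_def using assms(1) by auto
qed

lemma rows_sol:
  fixes k :: nat and a b h :: real and A B C D c :: "nat \<Rightarrow> nat \<Rightarrow> real"
  assumes k4: "k \<ge> 4"
  and sol: "\<forall>x\<in>set (rows k a b h A B C D). phi k (fst x) c = snd x"
  shows "ev k c \<in> VT k a b h
    \<and> (\<forall>i\<le>k-2. \<forall>j\<le>k-2.
          ev k c (a + h * real i / real (k-2)) (b + h * real j / real (k-2)) = A i j)
    \<and> (\<forall>i\<le>1. \<forall>j\<le>k-3.
          dx (ev k c) (a + h * real i) (b + h * real j / real (k-3)) = B i j)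
    \<and> (\<forall>i\<le>k-3. \<forall>j\<le>1.
          dy (ev k c) (a + h * real i / real (k-3)) (b + h * real j) = C i j)
    \<and> (\<forall>i\<le>1. \<forall>j\<le>1.
          dxy (ev k c) (a + h * real i) (b + h * real j) = D i j)"
proof (intro conjI allI impI)
  note S = set_append set_map set_product
  show "ev k c (a + h * real i / real (k-2)) (b + h * real j / real (k-2)) = A i j"
    if "i \<le> k-2" "j \<le> k-2" for i j
  proof -
    have "((\<lambda>p q. (a + h*real i/real(k-2))^p * (b + h*real j/real(k-2))^q), A i j) \<in> set (rows k a b h A B C D)"
      unfolding rows_def S by (intro UnI1 image_eqI[where x="(i,j)"]) (use that k4 in auto)
    thus ?thesis using sol phi_val by fastforce
  qed
  show "dx (ev k c) (a + h * real i) (b + h * real j / real (k-3)) = B i j"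
    if "i \<le> 1" "j \<le> k-3" for i j
  proof -
    have "((\<lambda>p q. (real p * (a + h*real i)^(p-1)) * (b + h*real j/real(k-3))^q), B i j) \<in> set (rows k a b h A B C D)"
      unfolding rows_def S by (intro UnI2 UnI1 image_eqI[where x="(i,j)"]) (use that k4 in auto)
    thus ?thesis using sol phi_dx by fastforce
  qed
  show "dy (ev k c) (a + h * real i / real (k-3)) (b + h * real j) = C i j"
    if "i \<le> k-3" "j \<le> 1" for i j
  proof -
    have "((\<lambda>p q. (a + h*real i/real(k-3))^p * (real q * (b + h*real j)^(q-1))), C i j) \<in> set (rows k a b h A B C D)"
      unfolding rows_def S by (intro UnI2 UnI1 image_eqI[where x="(i,j)"]) (use that k4 in auto)
    thus ?thesis using sol phi_dy by fastforce
  qed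
  show "dxy (ev k c) (a + h * real i) (b + h * real j) = D i j"
    if "i \<le> 1" "j \<le> 1" for i j
  proof -
    have "((\<lambda>p q. (real p * (a + h*real i)^(p-1)) * (real q * (b + h*real j)^(q-1))), D i j) \<in> set (rows k a b h A B C D)"
      unfolding rows_def S by (intro UnI2 UnI1 image_eqI[where x="(i,j)"]) (use that k4 in auto)
    thus ?thesis using sol phi_dxy by fastforce
  qed
  have k0: "k > 0" using k4 by simp
  have Ey: "poly1_on (k - 1) {a..a+h} (\<lambda>x. dy (ev k c) x yy)"
    if m: "((\<lambda>p q. if p = k then real q * yy^(q-1) else 0), 0) \<in> set (rows k a b h A B C D)" for yy
  proof (rule trunc[OF _ _ k0])
    show "\<forall>x. dy (ev k c) x yy = (\<Sum>i\<le>k. (\<Sum>j\<le>k. c i j * (real j * yy^(j-1))) * x^i)"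
      unfolding dy_ev by (simp add: sum_distrib_left mult_ac)
    have "phi k (\<lambda>p q. if p = k then real q * yy^(q-1) else 0) c = 0" using sol m by fastforce
    thus "(\<Sum>j\<le>k. c k j * (real j * yy^(j-1))) = 0" unfolding phi_E1 .
  qed
  have Ex: "poly1_on (k - 1) {b..b+h} (\<lambda>y. dx (ev k c) xx y)"
    if m: "((\<lambda>p q. if q = k then real p * xx^(p-1) else 0), 0) \<in> set (rows k a b h A B C D)" for xx
  proof (rule trunc[OF _ _ k0])
    show "\<forall>y. dx (ev k c) xx y = (\<Sum>j\<le>k. (\<Sum>i\<le>k. c i j * (real i * xx^(i-1))) * y^j)"
      unfolding dx_ev by (subst sum.swap) (simp add: sum_distrib_right)
    have "phi k (\<lambda>p q. if q = k then real p * xx^(p-1) else 0) c = 0" using sol m by fastforce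
    thus "(\<Sum>i\<le>k. c i k * (real i * xx^(i-1))) = 0" unfolding phi_E2 .
  qed
  have "Qk k (ev k c)" unfolding Qk_def ev_def by blast
  moreover have "poly1_on (k - 1) {a..a+h} (\<lambda>x. dy (ev k c) x b)"
    by (rule Ey) (simp add: rows_def)
  moreover have "poly1_on (k - 1) {a..a+h} (\<lambda>x. dy (ev k c) x (b+h))"
    by (rule Ey) (simp add: rows_def)
  moreover have "poly1_on (k - 1) {b..b+h} (\<lambda>y. dx (ev k c) a y)"
    by (rule Ex) (simp add: rows_def)
  moreover have "poly1_on (k - 1) {b..b+h} (\<lambda>y. dx (ev k c) (a+h) y)"
    by (rule Ex) (simp add: rows_def)
  ultimately show "ev k c \<in> VT k a b h" unfolding VT_def by blast
qed

theorem lemma2p1: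
  fixes k :: nat and a b h :: real
    and A B C D :: "nat \<Rightarrow> nat \<Rightarrow> real"
  assumes "k \<ge> 4" and "h > 0"
  shows "\<exists>!v. v \<in> VT k a b h
    \<and> (\<forall>i\<le>k-2. \<forall>j\<le>k-2.
          v (a + h * real i / real (k-2)) (b + h * real j / real (k-2)) = A i j)
    \<and> (\<forall>i\<le>1. \<forall>j\<le>k-3.
          dx v (a + h * real i) (b + h * real j / real (k-3)) = B i j)
    \<and> (\<forall>i\<le>k-3. \<forall>j\<le>1.
          dy v (a + h * real i / real (k-3)) (b + h * real j) = C i j)
    \<and> (\<forall>i\<le>1. \<forall>j\<le>1.
          dxy v (a + h * real i) (b + h * real j) = D i j)"
proof (rule ex_ex1I)
  note k4 = assms(1) and h = assms(2)
  define Z :: "nat \<Rightarrow> nat \<Rightarrow> real" where "Z = (\<lambda>_ _. 0)"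
  define R where "R = rows k a b h A B C D"
  define R0 where "R0 = rows k a b h Z Z Z Z"
  define N where "N = (k+1)*(k+1)"
  have lR: "length R = N" and lR0: "length R0 = N" unfolding R_def R0_def N_def using rows_len[OF k4] by auto
  have fstR: "fst (R ! r) = fst (R0 ! r)" if "r < N" for r
  proof -
    have mf: "map fst R = map fst R0" unfolding R_def R0_def by (rule rows_fst)
    have "map fst R ! r = map fst R0 ! r" unfolding mf ..
    thus ?thesis using that lR lR0 by simp
  qed
  have phiK: "phi k w c = (\<Sum>i<k+1. \<Sum>j<k+1. w i j * c i j)" for w c
    unfolding phi_def by (simp add: lessThan_Suc_atMost)
  obtain c where c: "\<forall>r<N. (\<Sum>i<k+1. \<Sum>j<k+1. fst (R0 ! r) i j * c i j) = snd (R ! r)"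
  proof -
    have "\<exists>c. \<forall>r<N. (\<Sum>i<k+1. \<Sum>j<k+1. fst (R0 ! r) i j * c i j) = snd (R ! r)"
    proof (rule linsys[where K="k+1"])
      show "N = (k+1)*(k+1)" unfolding N_def ..
      fix c :: "nat \<Rightarrow> nat \<Rightarrow> real"
      assume ker: "\<forall>r<N. (\<Sum>i<k+1. \<Sum>j<k+1. fst (R0 ! r) i j * c i j) = 0"
      have sol0: "\<forall>x\<in>set (rows k a b h Z Z Z Z). phi k (fst x) c = snd x"
      proof
        fix x assume x: "x \<in> set (rows k a b h Z Z Z Z)"
        hence "\<exists>r<length R0. R0 ! r = x" unfolding R0_def by (simp add: in_set_conv_nth)
        then obtain r where r: "r < N" "x = R0 ! r" using lR0 by auto
        have "snd x = 0" using rows_snd0 x unfolding Z_def by blast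
        thus "phi k (fst x) c = snd x" using ker r unfolding phiK by simp
      qed
      note P0 = rows_sol[OF k4 sol0]
      note P0v = P0[THEN conjunct1]
      note P0a = P0[THEN conjunct2, THEN conjunct1]
      note P0b = P0[THEN conjunct2, THEN conjunct2, THEN conjunct1]
      note P0c = P0[THEN conjunct2, THEN conjunct2, THEN conjunct2, THEN conjunct1]
      note P0d = P0[THEN conjunct2, THEN conjunct2, THEN conjunct2, THEN conjunct2]
      show "\<forall>i<k+1. \<forall>j<k+1. c i j = 0"
      proof (intro allI impI)
        fix i j assume ij: "i < k+1" "j < k+1"
        have "\<forall>x y. ev k c x y = 0"
        proof (intro allI)
          fix x y
          show "ev k c x y = 0"
          proof (rule core[OF k4 h refl])
            show "poly1_on (k - 1) {a..a+h} (\<lambda>x. dy (ev k c) x b)"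
              "poly1_on (k - 1) {a..a+h} (\<lambda>x. dy (ev k c) x (b + h))"
              "poly1_on (k - 1) {b..b+h} (\<lambda>y. dx (ev k c) a y)"
              "poly1_on (k - 1) {b..b+h} (\<lambda>y. dx (ev k c) (a + h) y)"
              using P0v unfolding VT_def by auto
            show "\<forall>i\<le>k-2. \<forall>j\<le>k-2.
              ev k c (a + h * real i / real (k-2)) (b + h * real j / real (k-2)) = 0"
              using P0a unfolding Z_def by simp
            show "\<forall>i\<le>1. \<forall>j\<le>k-3.
              dx (ev k c) (a + h * real i) (b + h * real j / real (k-3)) = 0"
              using P0b unfolding Z_def by simp
            show "\<forall>i\<le>k-3. \<forall>j\<le>1.
              dy (ev k c) (a + h * real i / real (k-3)) (b + h * real j) = 0"
              using P0c unfolding Z_def by simp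
            show "\<forall>i\<le>1. \<forall>j\<le>1.
              dxy (ev k c) (a + h * real i) (b + h * real j) = 0"
              using P0d unfolding Z_def by simp
          qed
        qed
        thus "c i j = 0" by (rule coef0) (use ij in auto)
      qed
    qed
    then obtain c0 where "\<forall>r<N. (\<Sum>i<k+1. \<Sum>j<k+1. fst (R0 ! r) i j * c0 i j) = snd (R ! r)" by blast
    thus ?thesis by (rule that)
  qed
  have sol: "\<forall>x\<in>set (rows k a b h A B C D). phi k (fst x) c = snd x"
  proof
    fix x assume x: "x \<in> set (rows k a b h A B C D)"
    hence "\<exists>r<length R. R ! r = x" unfolding R_def by (simp add: in_set_conv_nth)
    then obtain r where r: "r < N" "x = R ! r" using lR by auto
    show "phi k (fst x) c = snd x" using c r fstR[OF r(1)] unfolding phiK by simp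
  qed
  from rows_sol[OF k4 sol]
  show "\<exists>v. v \<in> VT k a b h
    \<and> (\<forall>i\<le>k-2. \<forall>j\<le>k-2.
          v (a + h * real i / real (k-2)) (b + h * real j / real (k-2)) = A i j)
    \<and> (\<forall>i\<le>1. \<forall>j\<le>k-3.
          dx v (a + h * real i) (b + h * real j / real (k-3)) = B i j)
    \<and> (\<forall>i\<le>k-3. \<forall>j\<le>1.
          dy v (a + h * real i / real (k-3)) (b + h * real j) = C i j)
    \<and> (\<forall>i\<le>1. \<forall>j\<le>1.
          dxy v (a + h * real i) (b + h * real j) = D i j)" by (rule exI[of _ "ev k c"])
next
  note k4 = assms(1) and h = assms(2)
  fix v1 v2
  assume H1: "v1 \<in> VT k a b h
    \<and> (\<forall>i\<le>k-2. \<forall>j\<le>k-2.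
          v1 (a + h * real i / real (k-2)) (b + h * real j / real (k-2)) = A i j)
    \<and> (\<forall>i\<le>1. \<forall>j\<le>k-3.
          dx v1 (a + h * real i) (b + h * real j / real (k-3)) = B i j)
    \<and> (\<forall>i\<le>k-3. \<forall>j\<le>1.
          dy v1 (a + h * real i / real (k-3)) (b + h * real j) = C i j)
    \<and> (\<forall>i\<le>1. \<forall>j\<le>1.
          dxy v1 (a + h * real i) (b + h * real j) = D i j)"
  assume H2: "v2 \<in> VT k a b h
    \<and> (\<forall>i\<le>k-2. \<forall>j\<le>k-2.
          v2 (a + h * real i / real (k-2)) (b + h * real j / real (k-2)) = A i j)
    \<and> (\<forall>i\<le>1. \<forall>j\<le>k-3.
          dx v2 (a + h * real i) (b + h * real j / real (k-3)) = B i j)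
    \<and> (\<forall>i\<le>k-3. \<forall>j\<le>1.
          dy v2 (a + h * real i / real (k-3)) (b + h * real j) = C i j)
    \<and> (\<forall>i\<le>1. \<forall>j\<le>1.
          dxy v2 (a + h * real i) (b + h * real j) = D i j)"
  obtain c1 where c1: "v1 = ev k c1" using H1[THEN conjunct1] Qk_ev unfolding VT_def by blast
  obtain c2 where c2: "v2 = ev k c2" using H2[THEN conjunct1] Qk_ev unfolding VT_def by blast
  define w where "w = ev k (\<lambda>i j. c1 i j - c2 i j)"
  have wv: "w x y = v1 x y - v2 x y" for x y unfolding w_def c1 c2 by (rule ev_diff)
  have wdx: "dx w x y = dx v1 x y - dx v2 x y" for x y unfolding w_def c1 c2 by (rule dx_diff)
  have wdy: "dy w x y = dy v1 x y - dy v2 x y" for x y unfolding w_def c1 c2 by (rule dy_diff)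
  have wdxy: "dxy w x y = dxy v1 x y - dxy v2 x y" for x y unfolding w_def c1 c2 by (rule dxy_diff)
  have V1: "poly1_on (k - 1) {a..a+h} (\<lambda>x. dy v1 x b)"
      "poly1_on (k - 1) {a..a+h} (\<lambda>x. dy v1 x (b + h))"
      "poly1_on (k - 1) {b..b+h} (\<lambda>y. dx v1 a y)"
      "poly1_on (k - 1) {b..b+h} (\<lambda>y. dx v1 (a + h) y)" using H1[THEN conjunct1] unfolding VT_def by auto
  have V2: "poly1_on (k - 1) {a..a+h} (\<lambda>x. dy v2 x b)"
      "poly1_on (k - 1) {a..a+h} (\<lambda>x. dy v2 x (b + h))"
      "poly1_on (k - 1) {b..b+h} (\<lambda>y. dx v2 a y)"
      "poly1_on (k - 1) {b..b+h} (\<lambda>y. dx v2 (a + h) y)" using H2[THEN conjunct1] unfolding VT_def by auto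
  have "w x y = 0" for x y
  proof (rule core[OF k4 h w_def])
    show "poly1_on (k - 1) {a..a+h} (\<lambda>x. dy w x b)"
      using poly1_diff[OF V1(1) V2(1)] unfolding wdy .
    show "poly1_on (k - 1) {a..a+h} (\<lambda>x. dy w x (b+h))"
      using poly1_diff[OF V1(2) V2(2)] unfolding wdy .
    show "poly1_on (k - 1) {b..b+h} (\<lambda>y. dx w a y)"
      using poly1_diff[OF V1(3) V2(3)] unfolding wdx .
    show "poly1_on (k - 1) {b..b+h} (\<lambda>y. dx w (a+h) y)"
      using poly1_diff[OF V1(4) V2(4)] unfolding wdx .
    show "\<forall>i\<le>k-2. \<forall>j\<le>k-2.
          w (a + h * real i / real (k-2)) (b + h * real j / real (k-2)) = 0"
      using H1[THEN conjunct2, THEN conjunct1] H2[THEN conjunct2, THEN conjunct1] unfolding wv by simp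
    show "\<forall>i\<le>1. \<forall>j\<le>k-3.
          dx w (a + h * real i) (b + h * real j / real (k-3)) = 0"
      using H1[THEN conjunct2, THEN conjunct2, THEN conjunct1] H2[THEN conjunct2, THEN conjunct2, THEN conjunct1] unfolding wdx by simp
    show "\<forall>i\<le>k-3. \<forall>j\<le>1.
          dy w (a + h * real i / real (k-3)) (b + h * real j) = 0"
      using H1[THEN conjunct2, THEN conjunct2, THEN conjunct2, THEN conjunct1] H2[THEN conjunct2, THEN conjunct2, THEN conjunct2, THEN conjunct1] unfolding wdy by simp
    show "\<forall>i\<le>1. \<forall>j\<le>1.
          dxy w (a + h * real i) (b + h * real j) = 0"
      using H1[THEN conjunct2, THEN conjunct2, THEN conjunct2, THEN conjunct2] H2[THEN conjunct2, THEN conjunct2, THEN conjunct2, THEN conjunct2] unfolding wdxy by simp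
  qed
  hence "v1 x y = v2 x y" for x y using wv by simp
  thus "v1 = v2" by (intro ext)
qed

end
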